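(* Let $G=(V,E)$ be a finite simple strongly connected directed graph with a fixed total order on $V$. For every $v\in V$, there is exactly one spanning tree $\mathbf a$ of $G$ rooted at $v$ with $\psi(\mathbf a)=V$; that is, $m(V,v)=1$.
   Context: A spanning tree of $G$ is a subgraph on all vertices with no cycle, one vertex (root) of outdegree $0$ and all others of outdegree $1$. Exploration algorithm (depends on the fixed total order of $V$). Input: a spanning tree $\mathbf a$ rooted at $v$. Initialize $A=\{v\}$, $F=\{e: s(e)\neq v\}$, $\mathbf L$ = FIFO list of edges with target $v$, by increasing source. While $\mathbf L$ is nonempty, take its first edge $e$, with source $w$: if $e\in\mathbf a$, add $w$ to $A$, delete from $\mathbf L$ (and $F$) all edges with source $w$, and append to $\mathbf L$ all edges of $F$ with target $w$ by increasing source; otherwise delete from $\mathbf L$ and $F$ all edges with source or target $w$. At the end $\phi(\mathbf a)=A$ and $\psi(\mathbf a)$ is the strongly connected component of $v$ in the induced graph $G_{\phi(\mathbf a)}$. For $W$ strongly connected and $w\in W$, $m(W,w)$ is the number of spanning trees rooted at $w$ with $\psi(\mathbf a)=W$. *)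

theory Defs
  imports Main
begin

text \<open>Directed graphs: vertex set V (finite), edge set E of pairs (source, target).
  The fixed total order on V is the linorder of the vertex type.\<close>

definition simple_digraph :: "'v set \<Rightarrow> ('v \<times> 'v) set \<Rightarrow> bool" where
  "simple_digraph V E \<longleftrightarrow> finite V \<and> E \<subseteq> V \<times> V \<and> (\<forall>x. (x, x) \<notin> E)"

definition strongly_connected :: "'v set \<Rightarrow> ('v \<times> 'v) set \<Rightarrow> bool" where
  "strongly_connected V E \<longleftrightarrow> (\<forall>x\<in>V. \<forall>y\<in>V. (x, y) \<in> E\<^sup>*)"

definition spanning_tree :: "'v set \<Rightarrow> ('v \<times> 'v) set \<Rightarrow> 'v \<Rightarrow> ('v \<times> 'v) set \<Rightarrow> bool" where
  "spanning_tree V E v a \<longleftrightarrow> v \<in> V \<and> a \<subseteq> E \<and> acyclic a \<and>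
     card {e \<in> a. fst e = v} = 0 \<and>
     (\<forall>u\<in>V - {v}. card {e \<in> a. fst e = u} = 1)"

definition explore_step :: "('v::linorder \<times> 'v) set \<Rightarrow>
    'v set \<times> ('v \<times> 'v) set \<times> ('v \<times> 'v) list \<Rightarrow> 'v set \<times> ('v \<times> 'v) set \<times> ('v \<times> 'v) list" where
  "explore_step a S = (case S of (A, F, L) \<Rightarrow>
     (case L of [] \<Rightarrow> (A, F, L)
      | e # _ \<Rightarrow> (let w = fst e in
          if e \<in> a then
            (let F' = {f \<in> F. fst f \<noteq> w} in
              (insert w A, F',
               filter (\<lambda>f. fst f \<noteq> w) L @
                 map (\<lambda>u. (u, w)) (sorted_list_of_set {u. (u, w) \<in> F'})))
          else
            (A, {f \<in> F. fst f \<noteq> w \<and> snd f \<noteq> w},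
             filter (\<lambda>f. fst f \<noteq> w \<and> snd f \<noteq> w) L))))"

definition explore_init :: "('v::linorder \<times> 'v) set \<Rightarrow> 'v \<Rightarrow> 'v set \<times> ('v \<times> 'v) set \<times> ('v \<times> 'v) list" where
  "explore_init E v = ({v}, {e \<in> E. fst e \<noteq> v},
      map (\<lambda>u. (u, v)) (sorted_list_of_set {u. (u, v) \<in> E}))"

text \<open>Each edge enters the list L at most once and each step removes the head of L, so
  after card E steps L is empty (explore_step is the identity on an empty list).\<close>
definition phi :: "('v::linorder \<times> 'v) set \<Rightarrow> 'v \<Rightarrow> ('v \<times> 'v) set \<Rightarrow> 'v set" where
  "phi E v a = fst ((explore_step a ^^ card E) (explore_init E v))"

definition scc_of :: "'v set \<Rightarrow> ('v \<times> 'v) set \<Rightarrow> 'v \<Rightarrow> 'v set" where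
  "scc_of A E v = {u \<in> A. (v, u) \<in> (E \<inter> A \<times> A)\<^sup>* \<and> (u, v) \<in> (E \<inter> A \<times> A)\<^sup>*}"

definition psi :: "('v::linorder \<times> 'v) set \<Rightarrow> 'v \<Rightarrow> ('v \<times> 'v) set \<Rightarrow> 'v set" where
  "psi E v a = scc_of (phi E v a) E v"

definition m_count :: "'v::linorder set \<Rightarrow> ('v \<times> 'v) set \<Rightarrow> 'v set \<Rightarrow> 'v \<Rightarrow> nat" where
  "m_count V E W w = card {a. spanning_tree V E w a \<and> psi E w a = W}"

end

theory Submission
  imports Defs
begin

definition runE :: "('v::linorder \<times> 'v) set \<Rightarrow> 'v \<Rightarrow> nat \<Rightarrow> 'v set \<times> ('v \<times> 'v) set \<times> ('v \<times> 'v) list" where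
  "runE E v n = (explore_step E ^^ n) (explore_init E v)"

primrec hs :: "('v::linorder \<times> 'v) set \<Rightarrow> 'v \<Rightarrow> nat \<Rightarrow> ('v \<times> 'v) set" where
  "hs E v 0 = {}"
| "hs E v (Suc n) = (case snd (snd (runE E v n)) of [] \<Rightarrow> hs E v n | h # _ \<Rightarrow> insert h (hs E v n))"

definition INV :: "'v set \<Rightarrow> ('v \<times> 'v) set \<Rightarrow> 'v \<Rightarrow> 'v set \<Rightarrow> ('v \<times> 'v) set \<Rightarrow> ('v \<times> 'v) list \<Rightarrow> ('v \<times> 'v) set \<Rightarrow> bool" where
  "INV V E v A F L T \<longleftrightarrow> v \<in> A \<and> A \<subseteq> V \<and> F = {e\<in>E. fst e \<notin> A} \<and>
     set L = {e\<in>E. snd e \<in> A \<and> fst e \<notin> A} \<and> T \<subseteq> E \<and> acyclic T \<and>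
     (\<forall>e\<in>T. fst e \<in> A - {v} \<and> snd e \<in> A) \<and> (\<forall>u\<in>A-{v}. \<exists>y. {e\<in>T. fst e = u} = {(u,y)})"

lemma finE: "simple_digraph V E \<Longrightarrow> finite E"
  unfolding simple_digraph_def by (meson finite_SigmaI finite_subset)

lemma step_E_inv:
  assumes sd: "simple_digraph V E" and inv: "INV V E v A F L T" and L: "L = h # r"
  shows "INV V E v (fst (explore_step E (A,F,L))) (fst (snd (explore_step E (A,F,L))))
           (snd (snd (explore_step E (A,F,L)))) (insert h T) \<and>
         fst (explore_step E (A,F,L)) = insert (fst h) A \<and> fst h \<notin> A"
proof -
  obtain w x where h: "h = (w,x)" by (cases h)
  have hL: "h \<in> set L" using L by simp
  then have hE: "h \<in> E" and xA: "x \<in> A" and wA: "w \<notin> A" using inv h by (auto simp: INV_def)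
  have fin: "finite E" using sd by (rule finE)
  define F' where "F' = {f\<in>F. fst f \<noteq> w}"
  have F'eq: "F' = {e\<in>E. fst e \<notin> insert w A}" using inv by (auto simp: INV_def F'_def)
  have finS: "finite {u. (u,w) \<in> F'}"
  proof (rule finite_subset[of _ "fst ` E"])
    show "{u. (u, w) \<in> F'} \<subseteq> fst ` E" using F'eq by force
  qed (use fin in simp)
  have st: "explore_step E (A,F,L) = (insert w A, F', filter (\<lambda>f. fst f \<noteq> w) L @
      map (\<lambda>u. (u,w)) (sorted_list_of_set {u. (u,w)\<in>F'}))"
    using hE by (simp add: explore_step_def L h F'_def Let_def)
  have setL: "set (filter (\<lambda>f. fst f \<noteq> w) L @ map (\<lambda>u. (u,w)) (sorted_list_of_set {u. (u,w)\<in>F'}))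
      = {e\<in>E. snd e \<in> insert w A \<and> fst e \<notin> insert w A}"
    using inv finS F'eq by (auto simp: INV_def)
  have Tsrc: "\<forall>e\<in>T. fst e \<in> A - {v} \<and> snd e \<in> A" using inv by (simp add: INV_def)
  have acyc: "acyclic (insert (w,x) T)"
  proof -
    have "(x,w) \<notin> T\<^sup>*"
    proof
      assume "(x,w) \<in> T\<^sup>*"
      then show False
      proof (cases rule: rtranclE)
        case base then show ?thesis using xA wA by simp
      next
        case (step y) then show ?thesis using Tsrc wA by fastforce
      qed
    qed
    then show ?thesis using inv by (simp add: INV_def acyclic_insert)
  qed
  have vA: "v \<in> A" using inv by (simp add: INV_def)
  have uniq: "\<forall>u\<in>insert w A - {v}. \<exists>y. {e\<in>insert h T. fst e = u} = {(u,y)}"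
  proof
    fix u assume u: "u \<in> insert w A - {v}"
    show "\<exists>y. {e\<in>insert h T. fst e = u} = {(u,y)}"
    proof (cases "u = w")
      case True
      have "{e\<in>insert h T. fst e = u} = {(w,x)}" using True Tsrc wA h by fastforce
      then show ?thesis using True by blast
    next
      case False
      then have "u \<in> A - {v}" using u by simp
      then obtain y where "{e\<in>T. fst e = u} = {(u,y)}" using inv unfolding INV_def by blast
      moreover have "{e\<in>insert h T. fst e = u} = {e\<in>T. fst e = u}" using False h by auto
      ultimately show ?thesis by blast
    qed
  qed
  have "INV V E v (insert w A) F' (filter (\<lambda>f. fst f \<noteq> w) L @
      map (\<lambda>u. (u,w)) (sorted_list_of_set {u. (u,w)\<in>F'})) (insert h T)"
    unfolding INV_def
  proof (intro conjI)
    show "insert w A \<subseteq> V" using inv hE sd by (auto simp: INV_def simple_digraph_def h)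
    show "insert h T \<subseteq> E" using inv hE by (auto simp: INV_def)
    show "acyclic (insert h T)" using acyc h by simp
    show "\<forall>e\<in>insert h T. fst e \<in> insert w A - {v} \<and> snd e \<in> insert w A"
      using Tsrc h xA wA vA by auto
  qed (use vA F'eq setL uniq in auto)
  then show ?thesis using st h wA by simp
qed


lemma init_inv:
  assumes sd: "simple_digraph V E" and vV: "v \<in> V"
  shows "INV V E v (fst (explore_init E v)) (fst (snd (explore_init E v))) (snd (snd (explore_init E v))) {}"
proof -
  have fin: "finite E" using sd by (rule finE)
  have finS: "finite {u. (u,v) \<in> E}"
    by (rule finite_subset[of _ "fst ` E"]) (use fin in force)+
  show ?thesis using finS sd vV
    by (auto simp: INV_def explore_init_def simple_digraph_def acyclic_def)
qed

lemma runE_Suc: "runE E v (Suc n) = explore_step E (runE E v n)"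
  by (simp add: runE_def)

lemma step_empty: "explore_step a (A,F,[]) = (A,F,[])"
  by (simp add: explore_step_def)

lemma run_inv:
  assumes sd: "simple_digraph V E" and vV: "v \<in> V"
  shows "INV V E v (fst (runE E v n)) (fst (snd (runE E v n))) (snd (snd (runE E v n))) (hs E v n)
     \<and> (card (fst (runE E v n)) = Suc n \<or> snd (snd (runE E v n)) = [])"
proof (induction n)
  case 0
  then show ?case using init_inv[OF sd vV] by (simp add: runE_def explore_init_def)
next
  case (Suc n)
  obtain A F L where R: "runE E v n = (A,F,L)" by (cases "runE E v n") auto
  have inv: "INV V E v A F L (hs E v n)" and c: "card A = Suc n \<or> L = []" using Suc R by auto
  have finA: "finite A" using inv sd by (auto simp: INV_def simple_digraph_def intro: finite_subset)
  show ?case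
  proof (cases L)
    case Nil
    then show ?thesis using inv R by (simp add: runE_Suc step_empty)
  next
    case (Cons h r)
    note S = step_E_inv[OF sd inv Cons]
    obtain A' F' L' where st: "explore_step E (A,F,L) = (A',F',L')" by (cases "explore_step E (A,F,L)") auto
    have S': "INV V E v A' F' L' (insert h (hs E v n))" "A' = insert (fst h) A" "fst h \<notin> A"
      using S st Cons by auto
    have "card A' = Suc (Suc n)" using S' c Cons finA by simp
    then show ?thesis using S' R Cons st by (simp add: runE_Suc)
  qed
qed

lemma INV_card:
  assumes sd: "simple_digraph V E" and inv: "INV V E v A F L T"
  shows "card T = card (A - {v})"
proof -
  have src: "\<forall>e\<in>T. fst e \<in> A - {v} \<and> snd e \<in> A" using inv by (simp add: INV_def)
  have uq: "\<forall>u\<in>A-{v}. \<exists>y. {e\<in>T. fst e = u} = {(u,y)}" using inv by (simp add: INV_def)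
  have "bij_betw fst T (A - {v})"
    unfolding bij_betw_def
  proof
    show "inj_on fst T"
    proof
      fix e1 e2 assume e: "e1 \<in> T" "e2 \<in> T" "fst e1 = fst e2"
      then have "fst e1 \<in> A - {v}" using src by blast
      then obtain y where y: "{e\<in>T. fst e = fst e1} = {(fst e1,y)}" using uq by blast
      have "e1 \<in> {e\<in>T. fst e = fst e1}" "e2 \<in> {e\<in>T. fst e = fst e1}" using e by auto
      then have "e1 \<in> {(fst e1,y)}" "e2 \<in> {(fst e1,y)}" using y by simp_all
      then show "e1 = e2" by simp
    qed
    show "fst ` T = A - {v}"
    proof
      show "fst ` T \<subseteq> A - {v}" using src by blast
      show "A - {v} \<subseteq> fst ` T"
      proof
        fix u assume "u \<in> A - {v}"
        then obtain y where "{e\<in>T. fst e = u} = {(u,y)}" using uq by blast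
        then have "(u,y) \<in> T" by blast
        then show "u \<in> fst ` T" by force
      qed
    qed
  qed
  then show ?thesis by (rule bij_betw_same_card)
qed

lemma cut_edge:
  assumes "(u,y) \<in> E\<^sup>*" "u \<notin> A" "y \<in> A"
  shows "\<exists>p q. (p,q) \<in> E \<and> p \<notin> A \<and> q \<in> A"
  using assms
proof (induction rule: rtrancl_induct)
  case base then show ?case by simp
next
  case (step y z)
  then show ?case by (cases "y \<in> A") auto
qed

lemma final_state:
  assumes sd: "simple_digraph V E" and sc: "strongly_connected V E" and vV: "v \<in> V"
  shows "snd (snd (runE E v (card E))) = [] \<and> fst (runE E v (card E)) = V"
proof -
  obtain A F L where R: "runE E v (card E) = (A,F,L)" by (cases "runE E v (card E)") auto
  define T where "T = hs E v (card E)"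
  have RI: "INV V E v A F L T \<and> (card A = Suc (card E) \<or> L = [])"
    using run_inv[OF sd vV, of "card E"] unfolding R T_def by simp
  then have inv: "INV V E v A F L T" and c: "card A = Suc (card E) \<or> L = []" by simp_all
  have vA: "v \<in> A" and AV: "A \<subseteq> V" and sL: "set L = {e\<in>E. snd e \<in> A \<and> fst e \<notin> A}"
    and TE: "T \<subseteq> E" and Ts: "\<forall>e\<in>T. fst e \<in> A - {v} \<and> snd e \<in> A"
    using inv unfolding INV_def by simp_all
  have fin: "finite E" using sd by (rule finE)
  have finA: "finite A" using AV sd unfolding simple_digraph_def using finite_subset by blast
  have Lnil: "L = []"
  proof (rule ccontr)
    assume ne: "L \<noteq> []"
    then obtain h r where Lh: "L = h # r" by (cases L) auto
    have "h \<in> set L" using Lh by simp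
    then have hE: "h \<in> E" and hA: "fst h \<notin> A" using sL by simp_all
    have cT: "card T = card (A - {v})" by (rule INV_card[OF sd inv])
    also have "\<dots> = card E" using c ne finA vA by simp
    finally have "T = E"
      using TE fin by (intro card_subset_eq) simp_all
    then have "h \<in> T" using hE by simp
    then have "fst h \<in> A" using Ts by blast
    then show False using hA by simp
  qed
  have "A = V"
  proof (rule ccontr)
    assume "A \<noteq> V"
    then obtain u where u: "u \<in> V" "u \<notin> A" using AV by blast
    have "(u,v) \<in> E\<^sup>*" using sc vV u(1) unfolding strongly_connected_def by blast
    then obtain p q where pq: "(p,q) \<in> E" "p \<notin> A" "q \<in> A" using cut_edge[OF _ u(2) vA] by blast
    then have "(p,q) \<in> set L" using sL by simp
    then show False using Lnil by simp
  qed
  then show ?thesis using R Lnil by simp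
qed


definition Ra :: "('v::linorder \<times> 'v) set \<Rightarrow> ('v \<times> 'v) set \<Rightarrow> 'v \<Rightarrow> nat \<Rightarrow> 'v set \<times> ('v \<times> 'v) set \<times> ('v \<times> 'v) list" where
  "Ra a E v n = (explore_step a ^^ n) (explore_init E v)"

lemma Ra_Suc: "Ra a E v (Suc n) = explore_step a (Ra a E v n)"
  by (simp add: Ra_def)

lemma set_sorted_sub: "set (sorted_list_of_set S) \<subseteq> S"
  by (cases "finite S") auto

lemma GI_step:
  assumes "set L \<subseteq> F" "explore_step a (A,F,L) = (A',F',L')"
  shows "set L' \<subseteq> F' \<and> (\<forall>w. w \<notin> A \<and> w \<notin> fst ` F \<longrightarrow> w \<notin> A' \<and> w \<notin> fst ` F')"
proof (cases L)
  case Nil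
  then show ?thesis using assms by (simp add: step_empty)
next
  case (Cons h r)
  have hF: "h \<in> F" using assms(1) Cons by simp
  show ?thesis
  proof (cases "h \<in> a")
    case True
    define G where "G = {f \<in> F. fst f \<noteq> fst h}"
    have st: "explore_step a (A,F,L) = (insert (fst h) A, G, filter (\<lambda>f. fst f \<noteq> fst h) L @
       map (\<lambda>u. (u, fst h)) (sorted_list_of_set {u. (u, fst h) \<in> G}))"
      using True by (simp add: explore_step_def Cons Let_def G_def)
    have s1: "set (map (\<lambda>u. (u, fst h)) (sorted_list_of_set {u. (u, fst h) \<in> G})) \<subseteq> G"
      using set_sorted_sub[of "{u. (u, fst h) \<in> G}"] by auto
    have "set (filter (\<lambda>f. fst f \<noteq> fst h) L) \<subseteq> G" using assms(1) by (auto simp: G_def)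
    then have "set L' \<subseteq> F'" using s1 st assms(2) by auto
    moreover have "\<forall>w. w \<notin> A \<and> w \<notin> fst ` F \<longrightarrow> w \<notin> A' \<and> w \<notin> fst ` F'"
      using st assms(2) hF by (force simp: G_def)
    ultimately show ?thesis by blast
  next
    case False
    have st: "explore_step a (A,F,L) = (A, {f \<in> F. fst f \<noteq> fst h \<and> snd f \<noteq> fst h},
             filter (\<lambda>f. fst f \<noteq> fst h \<and> snd f \<noteq> fst h) L)"
      using False by (simp add: explore_step_def Cons Let_def)
    then show ?thesis using assms by auto
  qed
qed

lemma GI_run:
  assumes sd: "simple_digraph V E"
  shows "set (snd (snd (Ra a E v n))) \<subseteq> fst (snd (Ra a E v n))"
proof (induction n)
  case 0
  have "finite {u. (u,v) \<in> E}"
    by (rule finite_subset[of _ "fst ` E"]) (use finE[OF sd] in force)+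
  then show ?case using sd by (auto simp: Ra_def explore_init_def simple_digraph_def)
next
  case (Suc n)
  obtain A F L where R: "Ra a E v n = (A,F,L)" by (cases "Ra a E v n") auto
  obtain A' F' L' where st: "explore_step a (A,F,L) = (A',F',L')" by (cases "explore_step a (A,F,L)") auto
  show ?case using GI_step[of L F a A A' F' L'] Suc R st by (simp add: Ra_Suc)
qed

lemma kill_prop:
  assumes sd: "simple_digraph V E"
    and "w \<notin> fst (Ra a E v m)" "w \<notin> fst ` fst (snd (Ra a E v m))"
  shows "w \<notin> fst (Ra a E v (m + d)) \<and> w \<notin> fst ` fst (snd (Ra a E v (m + d)))"
proof (induction d)
  case 0 then show ?case using assms by simp
next
  case (Suc d)
  obtain A F L where R: "Ra a E v (m+d) = (A,F,L)" by (cases "Ra a E v (m+d)") auto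
  obtain A' F' L' where st: "explore_step a (A,F,L) = (A',F',L')" by (cases "explore_step a (A,F,L)") auto
  have "set L \<subseteq> F" using GI_run[OF sd, of a v "m+d"] R by simp
  then show ?case using GI_step[of L F a A A' F' L'] Suc R st by (simp add: Ra_Suc)
qed

lemma agree:
  assumes "\<forall>k<n. snd (snd (runE E v k)) \<noteq> [] \<longrightarrow> hd (snd (snd (runE E v k))) \<in> a"
    and sd: "simple_digraph V E" and vV: "v \<in> V"
  shows "Ra a E v n = runE E v n"
  using assms(1)
proof (induction n)
  case 0 then show ?case by (simp add: Ra_def runE_def)
next
  case (Suc n)
  then have IH: "Ra a E v n = runE E v n" by simp
  obtain A F L where R: "runE E v n = (A,F,L)" by (cases "runE E v n") auto
  have inv: "INV V E v A F L (hs E v n)" using run_inv[OF sd vV, of n] R by simp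
  show ?case
  proof (cases L)
    case Nil
    then show ?thesis using IH R by (simp add: Ra_Suc runE_Suc step_empty)
  next
    case (Cons h r)
    have ha: "h \<in> a" using Suc.prems R Cons by auto
    have "h \<in> set L" using Cons by simp
    then have hE: "h \<in> E" using inv unfolding INV_def by simp
    have "explore_step a (A,F,L) = explore_step E (A,F,L)"
      using ha hE by (simp add: explore_step_def Cons)
    then show ?thesis using IH R by (simp add: Ra_Suc runE_Suc)
  qed
qed

lemma hs_mono: "m \<le> n \<Longrightarrow> hs E v m \<subseteq> hs E v n"
proof (induction n)
  case 0 then show ?case by simp
next
  case (Suc n)
  have "hs E v n \<subseteq> hs E v (Suc n)" by (auto split: list.split)
  then show ?case using Suc by (cases "m = Suc n") auto
qed

lemma head_in_hs:
  assumes "k < n" "snd (snd (runE E v k)) \<noteq> []"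
  shows "hd (snd (snd (runE E v k))) \<in> hs E v n"
proof -
  have "hd (snd (snd (runE E v k))) \<in> hs E v (Suc k)" using assms(2) by (auto split: list.split)
  then show ?thesis using hs_mono[of "Suc k" n E v] assms(1) by auto
qed

lemma hs_elem: "e \<in> hs E v n \<Longrightarrow> \<exists>k<n. snd (snd (runE E v k)) \<noteq> [] \<and> e = hd (snd (snd (runE E v k)))"
proof (induction n)
  case 0 then show ?case by simp
next
  case (Suc n)
  show ?case
  proof (cases "snd (snd (runE E v n))")
    case Nil
    then show ?thesis using Suc by (auto intro: less_SucI)
  next
    case (Cons h r)
    show ?thesis
    proof (cases "e = h")
      case True then show ?thesis using Cons by (intro exI[of _ n]) simp
    next
      case False then show ?thesis using Suc Cons by (auto intro: less_SucI)
    qed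
  qed
qed

theorem lemma3p1:
  fixes V :: "'v::linorder set" and E :: "('v \<times> 'v) set" and v :: 'v
  assumes "simple_digraph V E" and "strongly_connected V E" and "v \<in> V"
  shows "(\<exists>!a. spanning_tree V E v a \<and> psi E v a = V) \<and> m_count V E V v = 1"
proof -
  note sd = assms(1) and sc = assms(2) and vV = assms(3)
  define N where "N = card E"
  define a0 where "a0 = hs E v N"
  obtain A F L where R: "runE E v N = (A,F,L)" by (cases "runE E v N") auto
  have fs: "L = []" "A = V" using final_state[OF sd sc vV] R unfolding N_def by simp_all
  have inv: "INV V E v V F [] a0" using run_inv[OF sd vV, of N] R fs unfolding a0_def by simp
  have a0E: "a0 \<subseteq> E" and acyc: "acyclic a0" and src: "\<forall>e\<in>a0. fst e \<in> V - {v} \<and> snd e \<in> V"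
    and uq: "\<forall>u\<in>V-{v}. \<exists>y. {e\<in>a0. fst e = u} = {(u,y)}"
    using inv unfolding INV_def by simp_all
  have EVV: "E \<subseteq> V \<times> V" using sd by (simp add: simple_digraph_def)
  have finE': "finite E" using finE[OF sd] .
  have sccV: "scc_of V E v = V"
  proof -
    have "E \<inter> V \<times> V = E" using EVV by blast
    then show ?thesis using sc vV unfolding scc_of_def strongly_connected_def by auto
  qed
  have st0: "spanning_tree V E v a0"
    unfolding spanning_tree_def
  proof (intro conjI)
    show "card {e \<in> a0. fst e = v} = 0"
    proof -
      have "{e \<in> a0. fst e = v} = {}" using src by auto
      then show ?thesis by (metis card.empty)
    qed
    show "\<forall>u\<in>V - {v}. card {e \<in> a0. fst e = u} = 1"
    proof
      fix u assume "u \<in> V - {v}"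
      then obtain y where "{e\<in>a0. fst e = u} = {(u,y)}" using uq by blast
      then show "card {e \<in> a0. fst e = u} = 1" by simp
    qed
  qed (use vV a0E acyc in auto)
  have ag0: "Ra a0 E v N = runE E v N"
    by (rule agree[OF _ sd vV]) (use head_in_hs[of _ N E v] in \<open>auto simp: a0_def\<close>)
  have ps0: "psi E v a0 = V"
    using ag0 R fs sccV unfolding psi_def phi_def Ra_def N_def by simp
  have uniq: "a = a0" if sa: "spanning_tree V E v a" and pa: "psi E v a = V" for a
  proof -
    have aE: "a \<subseteq> E" using sa by (simp add: spanning_tree_def)
    have Vphi: "V \<subseteq> fst (Ra a E v N)"
      using pa unfolding psi_def phi_def scc_of_def Ra_def N_def by blast
    have ok: "\<forall>j<k. j < N \<longrightarrow> (snd (snd (runE E v j)) \<noteq> [] \<longrightarrow> hd (snd (snd (runE E v j))) \<in> a)" for k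
    proof (induction k)
      case 0 then show ?case by simp
    next
      case (Suc k)
      have "k < N \<longrightarrow> snd (snd (runE E v k)) \<noteq> [] \<longrightarrow> hd (snd (snd (runE E v k))) \<in> a"
      proof (intro impI, rule ccontr)
        assume kN: "k < N" and ne: "snd (snd (runE E v k)) \<noteq> []"
          and na: "hd (snd (snd (runE E v k))) \<notin> a"
        have agk: "Ra a E v k = runE E v k"
          by (rule agree[OF _ sd vV]) (use Suc.IH kN in auto)
        obtain Ak Fk Lk where Rk: "runE E v k = (Ak,Fk,Lk)" by (cases "runE E v k") auto
        obtain h r where Lk: "Lk = h # r" using ne Rk by (cases Lk) auto
        have invk: "INV V E v Ak Fk Lk (hs E v k)" using run_inv[OF sd vV, of k] Rk by simp
        have "h \<in> set Lk" using Lk by simp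
        then have hE: "h \<in> E" and wA: "fst h \<notin> Ak" using invk unfolding INV_def by simp_all
        have ha: "h \<notin> a" using na Rk Lk by simp
        have st: "Ra a E v (Suc k) = (Ak, {f \<in> Fk. fst f \<noteq> fst h \<and> snd f \<noteq> fst h},
             filter (\<lambda>f. fst f \<noteq> fst h \<and> snd f \<noteq> fst h) Lk)"
          using ha agk Rk by (simp add: Ra_Suc explore_step_def Lk Let_def)
        have k1: "fst h \<notin> fst (Ra a E v (Suc k))" "fst h \<notin> fst ` fst (snd (Ra a E v (Suc k)))"
          using st wA by auto
        have "fst h \<notin> fst (Ra a E v (Suc k + (N - Suc k)))"
          using kill_prop[OF sd k1] by blast
        moreover have "Suc k + (N - Suc k) = N" using kN by simp
        moreover have "fst h \<in> V" using hE EVV by auto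
        ultimately show False using Vphi by auto
      qed
      then show ?case using Suc.IH less_Suc_eq by auto
    qed
    have sub: "a0 \<subseteq> a"
    proof
      fix e assume "e \<in> a0"
      then obtain k where "k < N" "snd (snd (runE E v k)) \<noteq> []" "e = hd (snd (snd (runE E v k)))"
        unfolding a0_def using hs_elem by blast
      then show "e \<in> a" using ok[of "Suc k"] by auto
    qed
    have "a \<subseteq> a0"
    proof
      fix e assume ea: "e \<in> a"
      obtain u y where e: "e = (u,y)" by (cases e)
      have uV: "u \<in> V" using ea aE EVV e by auto
      have fa: "finite {e \<in> a. fst e = v}"
        using finite_subset[OF _ finE'] aE by auto
      have "card {e \<in> a. fst e = v} = 0" using sa by (simp add: spanning_tree_def)
      then have "{e \<in> a. fst e = v} = {}" using fa by simp
      then have uv: "u \<noteq> v" using ea e by auto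
      have c1: "card {e \<in> a. fst e = u} = 1" using sa uV uv by (simp add: spanning_tree_def)
      obtain y' where y': "{e\<in>a0. fst e = u} = {(u,y')}" using uq uV uv by blast
      then have "(u,y') \<in> a" using sub by blast
      then have "(u,y') \<in> {e \<in> a. fst e = u}" "(u,y) \<in> {e \<in> a. fst e = u}" using ea e by auto
      moreover obtain z where "{e \<in> a. fst e = u} = {z}" using c1 card_1_singletonE by blast
      ultimately have "y = y'" by (metis Pair_inject singletonD)
      then show "e \<in> a0" using y' e by blast
    qed
    then show ?thesis using sub by blast
  qed
  have ex1: "\<exists>!a. spanning_tree V E v a \<and> psi E v a = V"
    using st0 ps0 uniq by blast
  have "{a. spanning_tree V E v a \<and> psi E v a = V} = {a0}"
    using st0 ps0 uniq by blast
  then have "m_count V E V v = 1" by (simp add: m_count_def)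
  then show ?thesis using ex1 by blast
qed

end
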